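(* Let $\Omega\subset\mathbf{R}^2$ be a convex bounded domain whose boundary $\gamma$ is a smooth simple closed curve with curvature $k$ satisfying $0<\beta<\min_\gamma k$, and let $r=1/\beta$. Let $F$ be a real polynomial on $\mathbf{R}^2$ such that for every $s$ and every $\epsilon$ in a neighborhood of $0$, $$F\big(\gamma(s)+rR_{-\epsilon}J\dot\gamma(s)\big)=F\big(\gamma(s)-rR_{\epsilon}J\dot\gamma(s)\big).$$ Then $F$ is constant on $\gamma_{+r}\cup\gamma_{-r}$, i.e. there is a constant $c$ with $F|_{\gamma_{+r}}=F|_{\gamma_{-r}}=c$.
   Context: $\gamma(s)$ is the arc-length parametrization of $\gamma$ in counterclockwise direction, $J$ is counterclockwise rotation by $\pi/2$, $R_\epsilon$ is counterclockwise rotation by angle $\epsilon$. The parallel curves are $\gamma_{\pm r}(s)=\gamma(s)\pm rJ\dot\gamma(s)$. The displayed identity expresses that $F$ takes equal values at the center of a positive Larmor circle (radius $r$) hitting $\gamma$ at $\gamma(s)$ at angle $\epsilon$ and at the center of the reflected negative Larmor circle in the two-sided magnetic billiard (billiard in which the magnetic field changes sign after each reflection). *)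

theory Defs
  imports "HOL-Analysis.Analysis"
begin

text \<open>We identify \<open>R^2\<close> with \<open>\<complex>\<close>: \<open>J\<close> is multiplication by \<open>\<i>\<close>,
  \<open>R_\<epsilon>\<close> is multiplication by \<open>cis \<epsilon>\<close>.\<close>

definition vderiv :: "(real \<Rightarrow> complex) \<Rightarrow> real \<Rightarrow> complex" where
  "vderiv f = (\<lambda>t. vector_derivative f (at t))"

definition nderiv :: "nat \<Rightarrow> (real \<Rightarrow> complex) \<Rightarrow> real \<Rightarrow> complex" where
  "nderiv n f = (vderiv ^^ n) f"

definition smooth_curve :: "(real \<Rightarrow> complex) \<Rightarrow> bool" where
  "smooth_curve f \<longleftrightarrow> (\<forall>n t. nderiv n f differentiable (at t))"

text \<open>Signed curvature of an arc-length parametrized curve: \<open>\<gamma>'' = k J \<gamma>'\<close>.\<close>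
definition curvature :: "(real \<Rightarrow> complex) \<Rightarrow> real \<Rightarrow> real" where
  "curvature f s = Im (cnj (nderiv 1 f s) * nderiv 2 f s)"

definition polynomial2 :: "(complex \<Rightarrow> real) \<Rightarrow> bool" where
  "polynomial2 F \<longleftrightarrow> (\<exists>N (a :: nat \<Rightarrow> nat \<Rightarrow> real).
      \<forall>z. F z = (\<Sum>i\<le>N. \<Sum>j\<le>N. a i j * Re z ^ i * Im z ^ j))"

end

theory Submission
  imports Defs
begin

lemma poly2_diff: "polynomial2 F \<Longrightarrow> F differentiable (at z)"
proof -
  assume "polynomial2 F"
  then obtain N a where h: "\<forall>z. F z = (\<Sum>i\<le>N. \<Sum>j\<le>(N::nat). (a i j::real) * Re z ^ i * Im z ^ j)"
    unfolding polynomial2_def by blast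
  hence "F = (\<lambda>z. \<Sum>i\<le>N. \<Sum>j\<le>N. a i j * Re z ^ i * Im z ^ j)" by auto
  moreover have "(\<lambda>z. \<Sum>i\<le>N. \<Sum>j\<le>N. a i j * Re z ^ i * Im z ^ j) differentiable (at z)"
    using bounded_linear_imp_differentiable[OF bounded_linear_Re]
      bounded_linear_imp_differentiable[OF bounded_linear_Im]
    by (auto intro!: differentiable_sum differentiable_mult differentiable_power differentiable_const)
  ultimately show ?thesis by simp
qed

lemma chain_real:
  assumes "(g has_vector_derivative v) (at x)" "(F has_derivative D') (at (g x))"
  shows "((\<lambda>t. F (g t)) has_real_derivative D' v) (at x)"
proof -
  have l: "linear D'" using assms(2) has_derivative_linear by blast
  have "((\<lambda>t. F (g t)) has_derivative (\<lambda>h. D' (h *\<^sub>R v))) (at x)"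
    using has_derivative_compose[OF assms(1)[unfolded has_vector_derivative_def] assms(2)] .
  moreover have "(\<lambda>h. D' (h *\<^sub>R v)) = (*) (D' v)"
    using linear_scale[OF l] by (auto simp: mult.commute)
  ultimately show ?thesis by (simp add: has_field_derivative_def)
qed

lemma nd: "smooth_curve g \<Longrightarrow> (nderiv n g has_vector_derivative nderiv (Suc n) g t) (at t)"
  unfolding smooth_curve_def
  by (metis vector_derivative_works nderiv_def vderiv_def funpow.simps(2) o_apply)

lemma T2eq:
  assumes sm: "smooth_curve g" and n1: "\<forall>s. norm (nderiv 1 g s) = 1"
  shows "nderiv 2 g s = \<i> * of_real (curvature g s) * nderiv 1 g s"
proof -
  define T where "T = nderiv 1 g"
  define T2 where "T2 = nderiv 2 g"
  have dT: "(T has_vector_derivative T2 s) (at s)"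
    using nd[OF sm, of 1 s] by (simp add: T_def T2_def numeral_2_eq_2)
  have "((\<lambda>t. T t * cnj (T t)) has_vector_derivative (T s * cnj (T2 s) + T2 s * cnj (T s))) (at s)"
    using has_vector_derivative_mult[OF dT has_vector_derivative_cnj[OF dT]] .
  moreover have "(\<lambda>t. T t * cnj (T t)) = (\<lambda>t. 1)"
    using n1 by (auto simp: T_def complex_norm_square[symmetric])
  ultimately have "((\<lambda>t. 1::complex) has_vector_derivative (T s * cnj (T2 s) + T2 s * cnj (T s))) (at s)"
    by simp
  hence z: "T s * cnj (T2 s) + T2 s * cnj (T s) = 0"
    using vector_derivative_unique_at has_vector_derivative_const by metis
  define w where "w = cnj (T s) * T2 s"
  have "w + cnj w = 0" using z by (simp add: w_def algebra_simps)
  hence rw: "Re w = 0" by (simp add: complex_eq_iff)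
  have w: "w = \<i> * of_real (curvature g s)"
    using rw by (simp add: complex_eq_iff curvature_def w_def T_def T2_def)
  have "T s * cnj (T s) = 1" using n1 by (simp add: T_def complex_norm_square[symmetric])
  hence "T2 s = T s * w" by (simp add: w_def)
  thus ?thesis using w by (simp add: T_def T2_def algebra_simps)
qed

lemma cis_minus_deriv: "((\<lambda>e. cis (-e)) has_vector_derivative (-\<i>)) (at (0::real))"
proof -
  have "((\<lambda>e. cis (-e)) has_derivative (\<lambda>t. (-t) *\<^sub>R (\<i> * cis (-0)))) (at (0::real))"
    by (intro has_derivative_cis has_derivative_minus has_derivative_ident)
  moreover have "(\<lambda>t. (-t) *\<^sub>R (\<i> * cis (-0))) = (\<lambda>t::real. t *\<^sub>R (-\<i>))" by auto
  ultimately show ?thesis by (simp add: has_vector_derivative_def)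
qed

theorem proposition5p4:
  fixes \<Omega> :: "complex set" and \<gamma> :: "real \<Rightarrow> complex" and L \<beta> r :: real
    and F :: "complex \<Rightarrow> real"
  assumes "open \<Omega>" and "convex \<Omega>" and "bounded \<Omega>" and "connected \<Omega>" and "\<Omega> \<noteq> {}"
    and "L > 0"
    and "smooth_curve \<gamma>"
    and "\<forall>s. \<gamma> (s + L) = \<gamma> s"
    and "inj_on \<gamma> {0..<L}"
    and "\<forall>s. norm (nderiv 1 \<gamma> s) = 1"
    and "frontier \<Omega> = \<gamma> ` {0..L}"
    and "\<forall>s. \<exists>\<delta>>0. \<forall>t. 0 < t \<and> t < \<delta> \<longrightarrow> \<gamma> s + of_real t * \<i> * nderiv 1 \<gamma> s \<in> \<Omega>"
    and "0 < \<beta>" and "\<forall>s. \<beta> < curvature \<gamma> s"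
    and "r = 1 / \<beta>"
    and "polynomial2 F"
    and "\<exists>\<delta>>0. \<forall>s \<epsilon>. \<bar>\<epsilon>\<bar> < \<delta> \<longrightarrow>
           F (\<gamma> s + of_real r * cis (-\<epsilon>) * \<i> * nderiv 1 \<gamma> s)
         = F (\<gamma> s - of_real r * cis \<epsilon> * \<i> * nderiv 1 \<gamma> s)"
  shows "\<exists>c. \<forall>s. F (\<gamma> s + of_real r * \<i> * nderiv 1 \<gamma> s) = c
                \<and> F (\<gamma> s - of_real r * \<i> * nderiv 1 \<gamma> s) = c"
proof -
  note sm = assms(7) and n1 = assms(10)
  obtain \<delta> where \<delta>: "\<delta> > 0" and H: "\<forall>s \<epsilon>. \<bar>\<epsilon>\<bar> < \<delta> \<longrightarrow>
           F (\<gamma> s + of_real r * cis (-\<epsilon>) * \<i> * nderiv 1 \<gamma> s)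
         = F (\<gamma> s - of_real r * cis \<epsilon> * \<i> * nderiv 1 \<gamma> s)" using assms(17) by blast
  have rpos: "r > 0" using assms(13,15) by simp
  define T where "T = nderiv 1 \<gamma>"
  define k where "k = curvature \<gamma>"
  have dg: "\<And>s. (\<gamma> has_vector_derivative T s) (at s)"
    using nd[OF sm, of 0] by (simp add: T_def nderiv_def)
  have dT: "\<And>s. (T has_vector_derivative \<i> * of_real (k s) * T s) (at s)"
    using nd[OF sm, of 1] T2eq[OF sm n1] by (simp add: T_def k_def numeral_2_eq_2)
  define D where "D z = frechet_derivative F (at z)" for z
  have dF: "\<And>z. (F has_derivative D z) (at z)"
    unfolding D_def using poly2_diff[OF assms(16)] frechet_derivative_works by blast
  have lin: "\<And>z. linear (D z)" using dF has_derivative_linear by blast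
  define pp where "pp s = \<gamma> s + of_real r * \<i> * T s" for s
  define pm where "pm s = \<gamma> s - of_real r * \<i> * T s" for s
  have eq0: "\<And>s. F (pp s) = F (pm s)"
    using H \<delta> unfolding pp_def pm_def T_def by (metis abs_zero cis_zero minus_zero mult_1_right)
  have key1: "D (pp s) (T s) = D (pm s) (T s)" for s
  proof -
    define u where "u e = \<gamma> s + of_real r * cis (-e) * \<i> * T s" for e
    define v where "v e = \<gamma> s - of_real r * cis e * \<i> * T s" for e
    have du: "(u has_vector_derivative of_real r * T s) (at 0)"
    proof -
      have "(u has_vector_derivative 0 + of_real r * (-\<i>) * \<i> * T s) (at 0)"
        unfolding u_def
        by (intro has_vector_derivative_add has_vector_derivative_const
            has_vector_derivative_mult_left has_vector_derivative_mult_right cis_minus_deriv)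
      moreover have "0 + of_real r * (-\<i>) * \<i> * T s = of_real r * T s"
        by (simp add: complex_eq_iff)
      ultimately show ?thesis by simp
    qed
    have dv: "(v has_vector_derivative of_real r * T s) (at 0)"
    proof -
      have c: "(cis has_vector_derivative \<i>) (at (0::real))"
      proof -
        have "((\<lambda>e. cis e) has_derivative (\<lambda>t. t *\<^sub>R (\<i> * cis 0))) (at (0::real))"
          by (intro has_derivative_cis has_derivative_ident)
        thus ?thesis by (simp add: has_vector_derivative_def)
      qed
      have "(v has_vector_derivative 0 - of_real r * \<i> * \<i> * T s) (at 0)"
        unfolding v_def
        by (intro has_vector_derivative_diff has_vector_derivative_const
            has_vector_derivative_mult_left has_vector_derivative_mult_right c)
      moreover have "0 - of_real r * \<i> * \<i> * T s = of_real r * T s"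
        by (simp add: complex_eq_iff)
      ultimately show ?thesis by metis
    qed
    have u0: "u 0 = pp s" "v 0 = pm s" by (simp_all add: u_def v_def pp_def pm_def)
    have A: "((\<lambda>e. F (u e)) has_real_derivative D (pp s) (of_real r * T s)) (at 0)"
      using chain_real[OF du] dF u0 by metis
    have B: "((\<lambda>e. F (v e)) has_real_derivative D (pm s) (of_real r * T s)) (at 0)"
      using chain_real[OF dv] dF u0 by metis
    have A': "((\<lambda>e. F (v e)) has_real_derivative D (pp s) (of_real r * T s)) (at 0)"
      apply (rule has_field_derivative_transform_within_open[OF A, of "ball 0 \<delta>"])
      using \<delta> H by (auto simp: u_def v_def T_def)
    have "D (pp s) (of_real r * T s) = D (pm s) (of_real r * T s)"
      using DERIV_unique[OF A' B] .
    hence "r * D (pp s) (T s) = r * D (pm s) (T s)"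
      using linear_scale[OF lin, of _ r "T s"] by (simp add: scaleR_conv_of_real)
    thus ?thesis using rpos by simp
  qed
  have Dp: "((\<lambda>s. F (pp s)) has_real_derivative (1 - r * k s) * D (pp s) (T s)) (at s)" for s
  proof -
    have "(pp has_vector_derivative T s + of_real r * \<i> * (\<i> * of_real (k s) * T s)) (at s)"
      unfolding pp_def by (intro has_vector_derivative_add has_vector_derivative_mult_right dg dT)
    moreover have "T s + of_real r * \<i> * (\<i> * of_real (k s) * T s) = (1 - r * k s) *\<^sub>R T s"
      by (simp add: scaleR_conv_of_real algebra_simps)
    ultimately have "((\<lambda>s. F (pp s)) has_real_derivative D (pp s) ((1 - r * k s) *\<^sub>R T s)) (at s)"
      using chain_real dF by metis
    thus ?thesis using linear_scale[OF lin] by simp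
  qed
  have Dm: "((\<lambda>s. F (pm s)) has_real_derivative (1 + r * k s) * D (pm s) (T s)) (at s)" for s
  proof -
    have "(pm has_vector_derivative T s - of_real r * \<i> * (\<i> * of_real (k s) * T s)) (at s)"
      unfolding pm_def by (intro has_vector_derivative_diff has_vector_derivative_mult_right dg dT)
    moreover have "T s - of_real r * \<i> * (\<i> * of_real (k s) * T s) = (1 + r * k s) *\<^sub>R T s"
      by (simp add: scaleR_conv_of_real algebra_simps)
    ultimately have "((\<lambda>s. F (pm s)) has_real_derivative D (pm s) ((1 + r * k s) *\<^sub>R T s)) (at s)"
      using chain_real dF by metis
    thus ?thesis using linear_scale[OF lin] by simp
  qed
  have zero: "D (pp s) (T s) = 0" for s
  proof -
    have "((\<lambda>s. F (pp s)) has_real_derivative (1 + r * k s) * D (pm s) (T s)) (at s)"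
      using Dm[of s] eq0 by simp
    hence "(1 - r * k s) * D (pp s) (T s) = (1 + r * k s) * D (pm s) (T s)"
      using DERIV_unique Dp by blast
    hence "(r * k s) * D (pp s) (T s) = 0" using key1[of s] by (simp add: algebra_simps)
    moreover have "r * k s > 0" using rpos assms(13,14) unfolding k_def
      by (meson less_trans mult_pos_pos)
    ultimately show ?thesis by auto
  qed
  have const: "F (pp s) = F (pp 0)" for s
    using DERIV_isconst_all[of "\<lambda>s. F (pp s)"] Dp zero by (metis mult_zero_right)
  show ?thesis
    apply (rule exI[of _ "F (pp 0)"])
    using const eq0 unfolding pp_def pm_def T_def by metis
qed

end
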